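(* For integers $N\ge1$ and $n\ge2$ let $$\Sigma_2(n,N)=\sum_{(k,r,s)\in B_{m}\setminus B_{N\sqrt n}}\binom{2n}{n+\frac12krs}\binom{2n}{n+\frac14\left(kr^2+ks^2+(-1)^{\frac{k+1}{2}}\right)},\qquad m=5\sqrt{n\log n}.$$ Then $$\lim_{N\to\infty}\limsup_{n\to\infty}\frac{\Sigma_2(n,N)}{16^n\log n/\sqrt n}=0.$$
   Context: For real $t>0$, $B_t$ is the set of triples $(k,r,s)\in\mathbf Z^3$ with $k>0$ odd, $r>s>0$, $\gcd(r,s)=1$, $r\not\equiv s\pmod 2$, and $k(r^2+s^2)\le t$. Convention: $\binom{a}{b}=0$ if $b>a$. *)

theory Defs
  imports "HOL-Analysis.Analysis"
begin

definition B :: "real \<Rightarrow> (int \<times> int \<times> int) set" where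
  "B t = {(k, r, s). k > 0 \<and> odd k \<and> r > s \<and> s > 0 \<and> gcd r s = 1 \<and>
                     r mod 2 \<noteq> s mod 2 \<and> real_of_int (k * (r^2 + s^2)) \<le> t}"

definition binom :: "nat \<Rightarrow> int \<Rightarrow> nat" where
  "binom a b = (if 0 \<le> b \<and> b \<le> int a then a choose nat b else 0)"

text \<open>The summand. The quantities krs/2 and (kr^2+ks^2+(-1)^((k+1)/2))/4 are integers
  on B_t, so exact integer division is used.\<close>
definition Sigma2 :: "nat \<Rightarrow> nat \<Rightarrow> real" where
  "Sigma2 n N =
     (\<Sum>(k, r, s) \<in> B (5 * sqrt (real n * ln (real n))) - B (real N * sqrt (real n)).
        real (binom (2 * n) (int n + (k * r * s) div 2)) *
        real (binom (2 * n) (int n + (k * r^2 + k * s^2 + (-1) ^ nat ((k + 1) div 2)) div 4)))"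

end

theory Submission
  imports Defs "HOL-Real_Asymp.Real_Asymp"
begin

lemma central_rec: "real ((2*Suc n) choose Suc n) = real ((2*n) choose n) * (2*(2*real n+1)/(real n+1))"
proof -
  have a: "real ((2*Suc n) choose Suc n) = fact (2*n+2) / (fact (Suc n) * fact (Suc n))"
    by (subst binomial_fact) (auto simp: algebra_simps)
  have b: "real ((2*n) choose n) = fact (2*n) / (fact n * fact n)"
    by (subst binomial_fact) auto
  have c: "fact (2*n+2) = (real (2*n+2)*real(2*n+1)) * (fact (2*n)::real)"
    by (simp add: fact_Suc algebra_simps numeral_2_eq_2)
  have d: "(fact (Suc n)::real) = (real n + 1) * fact n" by (simp add: fact_Suc)
  have e: "(fact n::real) > 0" by simp
  have gen: "\<And>F G x::real. G > 0 \<Longrightarrow> x \<ge> 0 \<Longrightarrow> ((2*x+2)*(2*x+1)*F) / (((x+1)*G)*((x+1)*G)) = F/(G*G) * (2*(2*x+1)/(x+1))"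
  proof -
    fix F G x :: real assume "G > 0" "x \<ge> 0"
    then have "(x+1)*G \<noteq> 0" "G \<noteq> 0" "x+1 \<noteq> 0" by auto
    then show "((2*x+2)*(2*x+1)*F) / (((x+1)*G)*((x+1)*G)) = F/(G*G) * (2*(2*x+1)/(x+1))"
      by (simp add: divide_simps) (simp add: algebra_simps)
  qed
  show ?thesis unfolding a b c d using gen[OF e, of "real n" "fact (2*n)"] by (simp add: add.commute)
qed

lemma central_bound: "real ((2*n) choose n)^2 * (3*real n+1) \<le> 16^n"
proof (induction n)
  case 0 then show ?case by simp
next
  case (Suc n)
  define c where "c = real ((2*n) choose n)"
  have c0: "c \<ge> 0" by (simp add: c_def)
  have "(2*(2*real n+1))^2 * (3*real (Suc n)+1) \<le> 16 * (3*real n+1) * (real n+1)^2"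
    by (simp add: power2_eq_square algebra_simps)
  then have key: "(2*(2*real n+1)/(real n+1))^2 * (3*real (Suc n)+1) \<le> 16 * (3*real n+1)"
    by (simp add: power_divide pos_divide_le_eq)
  have "real ((2*Suc n) choose Suc n)^2 * (3*real (Suc n)+1) = c^2 * ((2*(2*real n+1)/(real n+1))^2 * (3*real (Suc n)+1))"
    by (subst central_rec) (simp add: c_def power_mult_distrib power_divide)
  also have "\<dots> \<le> c^2 * (16 * (3*real n+1))" using key by (intro mult_left_mono) auto
  also have "\<dots> = 16 * (c^2 * (3*real n+1))" by simp
  also have "\<dots> \<le> 16 * 16^n" using Suc.IH by (simp add: c_def)
  finally show ?case by simp
qed


lemma binom_step: "Suc k * (N choose Suc k) = (N - k) * (N choose k)"
  using binomial_absorption[of k N] binomial_absorb_comp[of N k] by simp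

lemma gauss_ratio:
  assumes n: "n \<ge> 1"
  shows "real ((2*n) choose (n+j)) \<le> real ((2*n) choose n) * exp (- ((real j)^2) / (2*real n))"
proof (induction j)
  case 0 then show ?case by simp
next
  case (Suc j)
  show ?case
  proof (cases "n + Suc j \<le> 2*n")
    case False
    then show ?thesis by (simp add: binomial_eq_0)
  next
    case True
    then have jn: "real j + 1 \<le> real n" by simp
    have e0: "2*n - (n+j) = n - j" by simp
    have e: "Suc (n+j) * ((2*n) choose Suc (n+j)) = (n - j) * ((2*n) choose (n+j))"
      using binom_step[of "n+j" "2*n"] unfolding e0 .
    have st: "real (n+j+1) * real ((2*n) choose (n+Suc j)) = real (n - j) * real ((2*n) choose (n+j))"
      using arg_cong[OF e, of real] by (simp only: of_nat_mult add_Suc_right Suc_eq_plus1 add.assoc)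
    have nj: "real (n - j) = real n - real j" using jn by simp
    have q: "(real n - real j)/(real n + real j + 1) \<le> exp (-(2*real j+1)/(2*real n))"
    proof -
      have "(real n - real j)/(real n + real j + 1) = 1 + (-(2*real j+1)/(real n + real j + 1))"
        by (simp add: field_simps)
      also have "\<dots> \<le> exp (-(2*real j+1)/(real n + real j + 1))" by (rule exp_ge_add_one_self)
      also have "\<dots> \<le> exp (-(2*real j+1)/(2*real n))"
        using jn n by (intro exp_mono) (simp add: divide_simps)
      finally show ?thesis .
    qed
    have pos: "real (n+j+1) > 0" by simp
    have "real ((2*n) choose (n+Suc j)) = (real n - real j)/(real n + real j + 1) * real ((2*n) choose (n+j))"
      using st pos nj by (simp add: field_simps)
    also have "\<dots> \<le> exp (-(2*real j+1)/(2*real n)) * (real ((2*n) choose n) * exp (- ((real j)^2) / (2*real n)))"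
      using q Suc.IH jn by (intro mult_mono) auto
    also have "\<dots> = real ((2*n) choose n) * exp (- ((real (Suc j))^2) / (2*real n))"
    proof -
      have "-(2*real j+1)/(2*real n) + - ((real j)^2) / (2*real n) = - ((real (Suc j))^2) / (2*real n)"
        using n by (simp add: field_simps power2_eq_square)
      then show ?thesis by (simp add: exp_add[symmetric])
    qed
    finally show ?thesis .
  qed
qed

lemma binom_nat: "b \<ge> 0 \<Longrightarrow> binom (2*n) (int n + b) = (2*n) choose (n + nat b)"
  unfolding binom_def by (auto simp: binomial_eq_0 nat_add_distrib)

lemma int_div4: "real_of_int (x div 4) \<ge> (real_of_int x - 3)/4"
proof -
  have "x = 4*(x div 4) + x mod 4" by simp
  moreover have "x mod 4 \<le> 3" by simp
  ultimately have "4*(x div 4) \<ge> x - 3" by linarith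
  then have "real_of_int (4*(x div 4)) \<ge> real_of_int (x - 3)" by (simp only: of_int_le_iff)
  then show ?thesis by simp
qed

lemma neg1_pow_ge: "((-1::int)^p) \<ge> -1"
  by (cases "even p") auto


lemma central_le: 
  assumes "n \<ge> 1"
  shows "real ((2*n) choose n) \<le> 4^n / sqrt (real n)"
proof -
  define c where "c = real ((2*n) choose n)"
  have "c^2 * (3*real n+1) \<le> 16^n" unfolding c_def by (rule central_bound)
  moreover have "c^2 * real n \<le> c^2 * (3*real n+1)" by (intro mult_left_mono) auto
  moreover have "(16::real)^n = (4^n)^2"
  proof -
    have "(4::real)^n * 4^n = (4*4)^n" by (rule power_mult_distrib[symmetric])
    then show ?thesis by (simp add: power2_eq_square)
  qed
  ultimately have "c^2 * real n \<le> (4^n)^2" by linarith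
  then have "sqrt (c^2 * real n) \<le> sqrt ((4^n)^2)" by (rule real_sqrt_le_mono)
  then have "c * sqrt (real n) \<le> 4^n" by (simp add: real_sqrt_mult c_def)
  then show ?thesis using assms by (simp add: c_def pos_le_divide_eq)
qed

lemma binom_bound:
  assumes n: "n \<ge> 1" and b: "b \<ge> 0"
  shows "real (binom (2*n) (int n + b)) \<le> 4^n / sqrt (real n) * exp (- ((real_of_int b)^2) / (2*real n))"
proof -
  have "real (binom (2*n) (int n + b)) = real ((2*n) choose (n + nat b))" using b by (simp add: binom_nat)
  also have "\<dots> \<le> real ((2*n) choose n) * exp (- ((real (nat b))^2) / (2*real n))" by (rule gauss_ratio[OF n])
  also have "\<dots> \<le> 4^n / sqrt (real n) * exp (- ((real (nat b))^2) / (2*real n))"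
    by (intro mult_right_mono central_le n) auto
  finally show ?thesis using b by simp
qed

lemma inv_sq_tail:
  assumes R: "R \<ge> 1" and RM: "R \<le> M"
  shows "(\<Sum>r\<in>{R<..M}. 1/(real r)^2) \<le> 1/real R - 1/real M"
  using RM
proof (induction M)
  case 0 then show ?case using R by simp
next
  case (Suc M)
  show ?case
  proof (cases "R = Suc M")
    case True then show ?thesis by simp
  next
    case False
    then have RM': "R \<le> M" using Suc.prems by simp
    have sp: "{R<..Suc M} = insert (Suc M) {R<..M}" using RM' by auto
    have "(\<Sum>r\<in>{R<..Suc M}. 1/(real r)^2) = 1/(real (Suc M))^2 + (\<Sum>r\<in>{R<..M}. 1/(real r)^2)"
      unfolding sp by (subst sum.insert) auto
    also have "\<dots> \<le> 1/(real (Suc M))^2 + (1/real R - 1/real M)" using Suc.IH[OF RM'] by simp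
    also have "\<dots> \<le> 1/real R - 1/real (Suc M)"
    proof -
      have M1: "real M \<ge> 1" using R RM' by simp
      have "1/(1 + real M)^2 \<le> 1/(real M*(1 + real M))"
        using M1 by (intro divide_left_mono) (auto simp: power2_eq_square)
      also have "\<dots> = 1/real M - 1/(1 + real M)" using M1 by (simp add: field_simps)
      finally have "1/(1 + real M)^2 \<le> 1/real M - 1/(1 + real M)" .
      then show ?thesis unfolding of_nat_Suc by linarith
    qed
    finally show ?thesis .
  qed
qed

lemma inv_sq_sum: "(\<Sum>r\<in>{1..M}. 1/(real r)^2) \<le> 2"
proof (cases "M \<ge> 1")
  case False then show ?thesis by simp
next
  case True
  have sp: "{1..M} = insert 1 {1<..M}" using True by auto
  have "(\<Sum>r\<in>{1..M}. 1/(real r)^2) = 1 + (\<Sum>r\<in>{1<..M}. 1/(real r)^2)"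
    unfolding sp by (subst sum.insert) auto
  also have "\<dots> \<le> 1 + (1/real 1 - 1/real M)" using inv_sq_tail[of 1 M] True by simp
  also have "\<dots> \<le> 2" using True by simp
  finally show ?thesis .
qed

lemma gauss_sum_gen:
  fixes a :: real
  assumes a: "a > 0" and R: "R \<ge> 1"
  shows "(\<Sum>r\<in>{1..M}. 1/(1 + a*(real r)^2)) \<le> real R + 1/(a * real R)"
proof (cases "M \<le> R")
  case True
  have "(\<Sum>r\<in>{1..M}. 1/(1 + a*(real r)^2)) \<le> (\<Sum>r\<in>{1..M}. (1::real))"
    using a by (intro sum_mono) (simp add: divide_simps)
  also have "\<dots> = real M" by simp
  also have "\<dots> \<le> real R + 1/(a * real R)" using True a R by (simp add: add_increasing2)
  finally show ?thesis .
next
  case False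
  have sp: "{1..M} = {1..R} \<union> {R<..M}" using False R by auto
  have pos: "\<And>r. 1 + a*(real r)^2 > 0" using a by (simp add: add_pos_nonneg)
  have "(\<Sum>r\<in>{1..M}. 1/(1 + a*(real r)^2)) = (\<Sum>r\<in>{1..R}. 1/(1 + a*(real r)^2)) + (\<Sum>r\<in>{R<..M}. 1/(1 + a*(real r)^2))"
    unfolding sp by (subst sum.union_disjoint) auto
  also have "\<dots> \<le> (\<Sum>r\<in>{1..R}. (1::real)) + (\<Sum>r\<in>{R<..M}. (1/a) * (1/(real r)^2))"
    using a pos by (intro add_mono sum_mono) (auto simp: divide_simps)
  also have "\<dots> = real R + (1/a) * (\<Sum>r\<in>{R<..M}. 1/(real r)^2)"
    by (simp add: sum_distrib_left)
  also have "\<dots> \<le> real R + (1/a) * (1/real R)"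
  proof -
    have "1/real M \<ge> 0" by simp
    then have "(\<Sum>r\<in>{R<..M}. 1/(real r)^2) \<le> 1/real R" using inv_sq_tail[of R M] False R by linarith
    then show ?thesis using a by (intro add_left_mono mult_left_mono) auto
  qed
  finally show ?thesis by simp
qed

lemma gauss_sum:
  fixes a :: real
  assumes a: "a > 0"
  shows "(\<Sum>r\<in>{1..M}. exp (- (a*(real r)^2))) \<le> 3 / sqrt a"
proof -
  have "(\<Sum>r\<in>{1..M}. exp (- (a*(real r)^2))) \<le> (\<Sum>r\<in>{1..M}. 1/(1 + a*(real r)^2))"
  proof (intro sum_mono)
    fix r :: nat
    have p: "1 + a*(real r)^2 > 0" using a by (simp add: add_pos_nonneg)
    have "1 + a*(real r)^2 \<le> exp (a*(real r)^2)" by (rule exp_ge_add_one_self)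
    then have "exp (- (a*(real r)^2)) * (1 + a*(real r)^2) \<le> 1"
    proof -
      have "exp (- (a*(real r)^2)) * (1 + a*(real r)^2) \<le> exp (- (a*(real r)^2)) * exp (a*(real r)^2)"
        using \<open>1 + a*(real r)^2 \<le> exp (a*(real r)^2)\<close> by (intro mult_left_mono) auto
      also have "\<dots> = 1" by (simp add: exp_minus_inverse mult.commute)
      finally show ?thesis .
    qed
    then show "exp (- (a*(real r)^2)) \<le> 1/(1 + a*(real r)^2)"
      using p by (simp add: pos_le_divide_eq)
  qed
  also have "\<dots> \<le> 3 / sqrt a"
  proof (cases "a \<ge> 1")
    case True
    have pos: "\<And>r. 1 + a*(real r)^2 > 0" using a by (simp add: add_pos_nonneg)
    have "(\<Sum>r\<in>{1..M}. 1/(1 + a*(real r)^2)) \<le> (\<Sum>r\<in>{1..M}. (1/a) * (1/(real r)^2))"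
      using a pos by (intro sum_mono) (auto simp: divide_simps)
    also have "\<dots> = (1/a) * (\<Sum>r\<in>{1..M}. 1/(real r)^2)" by (simp add: sum_distrib_left)
    also have "\<dots> \<le> (1/a) * 2" using inv_sq_sum[of M] a by (intro mult_left_mono) auto
    also have "\<dots> \<le> 3 / sqrt a"
    proof -
      have s1: "sqrt a \<ge> 1" using True by simp
      have "sqrt a * 1 \<le> sqrt a * sqrt a" using s1 by (intro mult_left_mono) auto
      then have "sqrt a \<le> a" using a by simp
      then show ?thesis using a by (simp add: divide_simps)
    qed
    finally show ?thesis .
  next
    case False
    define R where "R = nat (floor (1 / sqrt a))"
    have sa: "sqrt a > 0" "sqrt a < 1" using a False by auto
    have ge: "1 / sqrt a > 1" using sa by simp
    have R1: "R \<ge> 1" unfolding R_def using ge by linarith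
    have Rle: "real R \<le> 1 / sqrt a" unfolding R_def using ge by linarith
    have Rgt: "real R + 1 > 1 / sqrt a" unfolding R_def using ge by linarith
    have "1/(a * real R) \<le> 2 / sqrt a"
    proof -
      have "2 * real R \<ge> real R + 1" using R1 by simp
      then have "2 * real R > 1 / sqrt a" using Rgt by linarith
      then have "2 * real R * sqrt a > 1" using sa by (simp add: divide_simps)
      then have "2 * real R * sqrt a * sqrt a > 1 * sqrt a" using sa by (intro mult_strict_right_mono) auto
      moreover have "2 * real R * sqrt a * sqrt a = 2 * (a * real R)"
      proof -
        have "2 * real R * sqrt a * sqrt a = 2 * real R * (sqrt a * sqrt a)" by (simp only: mult.assoc)
        also have "\<dots> = 2 * (a * real R)" using a by simp
        finally show ?thesis .
      qed
      ultimately have "2 * (a * real R) > sqrt a" by linarith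
      moreover have "a * real R > 0" using a R1 by simp
      ultimately show ?thesis using sa R1 by (simp add: divide_simps)
    qed
    then have "real R + 1/(a * real R) \<le> 3 / sqrt a" using Rle by simp
    then show ?thesis using gauss_sum_gen[OF a R1, of M] by linarith
  qed
  finally show ?thesis .
qed

lemma exp_part:
  fixes T j A c Nr :: real and n :: nat
  assumes n: "n \<ge> 1" and A: "A = Nr * sqrt (real n)" and c: "c = Nr / (100 * sqrt (real n))"
    and TA: "T > A" and A0: "A > 0" and jT: "j \<ge> T/5"
  shows "exp (- (j^2) / (2*real n)) \<le> exp (- (Nr^2) / 100) * exp (- (c*T))"
proof -
  define s where "s = sqrt (real n)"
  have s0: "s > 0" using n by (simp add: s_def)
  have ss: "s * s = real n" using n by (simp add: s_def)
  have T0: "T > 0" using TA A0 by linarith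
  have "j^2 \<ge> (T/5)^2" using jT T0 by (intro power_mono) auto
  then have j2: "j^2 \<ge> T*T/25" by (simp add: power2_eq_square)
  have "T*T \<ge> A*T" using TA T0 by (intro mult_right_mono) auto
  moreover have "A*T \<ge> A*A" using TA A0 by (intro mult_left_mono) auto
  ultimately have TT: "2*(T*T) \<ge> A*A + A*T" by linarith
  have AA: "A*A = Nr^2 * real n" unfolding A s_def[symmetric] using ss by (simp add: power2_eq_square algebra_simps)
  have AT: "A*T = c*T * (100*real n)" unfolding A c s_def[symmetric] using s0 ss by (simp add: field_simps)
  have "Nr^2/100 + c*T = (A*A + A*T)/(100*real n)" using n AA AT by (simp add: field_simps) (metis)
  also have "\<dots> \<le> (2*(T*T))/(100*real n)" using TT n by (intro divide_right_mono) auto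
  also have "\<dots> = (T*T/25)/(2*real n)" by simp
  also have "\<dots> \<le> j^2/(2*real n)" using j2 n by (intro divide_right_mono) auto
  finally have "Nr^2/100 + c*T \<le> j^2/(2*real n)" .
  then have "exp (- (j^2) / (2*real n)) \<le> exp (- (Nr^2/100) + - (c*T))" by simp
  also have "\<dots> = exp (- (Nr^2) / 100) * exp (- (c*T))" by (simp only: exp_add) simp
  finally show ?thesis .
qed

lemma term_bound:
  fixes k r s :: int and n N :: nat
  assumes n: "n \<ge> 2" and N: "N \<ge> 20"
    and x: "(k,r,s) \<in> B (5* sqrt(real n*ln(real n))) - B (real N* sqrt(real n))"
  shows "real (binom (2*n) (int n + (k*r* s) div 2)) *
         real (binom (2*n) (int n + (k*r^2 + k* s^2 + (-1)^nat((k+1) div 2)) div 4))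
     \<le> 16^n/real n * exp(-((real N)^2)/100) *
        (exp (- ((real N/(100* sqrt(real n)) * real_of_int k) * (real_of_int r)^2)) *
         exp (- ((real N/(100* sqrt(real n)) * real_of_int k) * (real_of_int s)^2)))"
proof -
  define A where "A = real N * sqrt (real n)"
  define c where "c = real N / (100 * sqrt (real n))"
  define T where "T = k*(r^2+s^2)"
  define b2 where "b2 = (k*r^2 + k* s^2 + (-1)^nat((k+1) div 2)) div 4"
  have n1: "n \<ge> 1" using n by simp
  have sn: "sqrt (real n) \<ge> 1" using n1 by simp
  have kpos: "k > 0" and spos: "s > 0" and rs: "r > s" and TA: "real_of_int T > A"
    using x unfolding B_def A_def T_def by auto
  have N20: "real N \<ge> 20" using N by simp
  have "real N * 1 \<le> real N * sqrt (real n)" using sn by (intro mult_left_mono) auto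
  then have A20: "A \<ge> 20" unfolding A_def using N20 by linarith
  have b1: "(k*r* s) div 2 \<ge> 0" using kpos spos rs by simp
  define X where "X = k*r^2 + k* s^2 + (-1)^nat((k+1) div 2)"
  have hX: "X \<ge> T - 1"
  proof -
    have "((-1::int)^nat((k+1) div 2)) \<ge> -1" by (cases "even (nat((k+1) div 2))") auto
    then show ?thesis unfolding T_def X_def by (simp add: algebra_simps)
  qed
  then have "real_of_int (T - 1) \<le> real_of_int X" by (simp only: of_int_le_iff)
  then have hX': "real_of_int T - 1 \<le> real_of_int X" by simp
  have "real_of_int b2 \<ge> (real_of_int X - 3)/4"
    unfolding b2_def X_def by (rule int_div4)
  moreover have "(real_of_int T - 4)/4 \<le> (real_of_int X - 3)/4" using hX' by (intro divide_right_mono) auto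
  ultimately have b2T: "real_of_int b2 \<ge> (real_of_int T - 4)/4" by linarith
  have "(real_of_int T - 4)/4 \<ge> real_of_int T / 5" using TA A20 by (simp add: field_simps)
  with b2T have b2T5: "real_of_int b2 \<ge> real_of_int T / 5" by linarith
  have b20: "b2 \<ge> 0" using b2T5 TA A20 by linarith
  have f1: "real (binom (2*n) (int n + (k*r* s) div 2)) \<le> 4^n / sqrt (real n)"
  proof -
    have "real (binom (2*n) (int n + (k*r* s) div 2)) \<le> 4^n / sqrt (real n) * exp (- ((real_of_int ((k*r* s) div 2))^2) / (2*real n))"
      by (rule binom_bound[OF n1 b1])
    also have "\<dots> \<le> 4^n / sqrt (real n) * 1" by (intro mult_left_mono) auto
    finally show ?thesis by simp
  qed
  have f2: "real (binom (2*n) (int n + b2)) \<le> 4^n / sqrt (real n) * (exp (- ((real N)^2) / 100) * exp (- (c*real_of_int T)))"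
  proof -
    have "real (binom (2*n) (int n + b2)) \<le> 4^n / sqrt (real n) * exp (- ((real_of_int b2)^2) / (2*real n))"
      by (rule binom_bound[OF n1 b20])
    also have "\<dots> \<le> 4^n / sqrt (real n) * (exp (- ((real N)^2) / 100) * exp (- (c*real_of_int T)))"
      by (intro mult_left_mono exp_part[OF n1 A_def c_def TA]) (use A20 b2T5 in auto)
    finally show ?thesis .
  qed
  have "real (binom (2*n) (int n + (k*r* s) div 2)) * real (binom (2*n) (int n + b2))
     \<le> (4^n / sqrt (real n)) * (4^n / sqrt (real n) * (exp (- ((real N)^2) / 100) * exp (- (c*real_of_int T))))"
    using f1 f2 by (intro mult_mono) auto
  also have "\<dots> = 16^n/real n * exp(-((real N)^2)/100) * exp (- (c*real_of_int T))"
  proof -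
    have "(4^n / sqrt (real n)) * (4^n / sqrt (real n)) = (16::real)^n / real n"
      using n1 by (simp add: power_mult_distrib[symmetric])
    then show ?thesis by (simp add: algebra_simps)
  qed
  also have "exp (- (c*real_of_int T)) = exp (- ((c * real_of_int k) * (real_of_int r)^2)) * exp (- ((c * real_of_int k) * (real_of_int s)^2))"
    unfolding T_def by (simp add: exp_add[symmetric] algebra_simps)
  finally show ?thesis unfolding b2_def c_def by simp
qed

lemma int_range_image: "{1..K::int} = int ` {1..nat K}"
proof (cases "K \<ge> 0")
  case True
  then show ?thesis by (simp add: image_int_atLeastAtMost)
next
  case False then show ?thesis by auto
qed

lemma gauss_sum_int:
  fixes a :: real assumes a: "a > 0"
  shows "(\<Sum>r\<in>{1..K::int}. exp (- (a*(real_of_int r)^2))) \<le> 3 / sqrt a"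
proof -
  have "(\<Sum>r\<in>{1..K::int}. exp (- (a*(real_of_int r)^2))) = (\<Sum>r\<in>{1..nat K}. exp (- (a*(real r)^2)))"
    unfolding int_range_image by (subst sum.reindex) (auto simp: inj_on_def)
  also have "\<dots> \<le> 3 / sqrt a" by (rule gauss_sum[OF a])
  finally show ?thesis .
qed

lemma harm_int:
  fixes K :: int and m :: real
  assumes K: "real_of_int K \<le> m" "m \<ge> 1"
  shows "(\<Sum>k\<in>{1..K}. 1 / real_of_int k) \<le> 1 + ln m"
proof -
  have "(\<Sum>k\<in>{1..K}. 1 / real_of_int k) = (\<Sum>k\<in>{1..nat K}. 1 / real k)"
    unfolding int_range_image by (subst sum.reindex) (auto simp: inj_on_def)
  also have "\<dots> = harm (nat K)" unfolding harm_def by (simp add: divide_inverse)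
  also have "\<dots> \<le> 1 + ln m"
  proof (cases "nat K \<ge> 1")
    case False
    then have "nat K = 0" by simp
    then show ?thesis using K by (simp add: harm_def)
  next
    case True
    have "harm (nat K) - ln (real (nat K)) \<le> harm 1 - ln (real (1::nat))"
      using euler_mascheroni_sequence_decreasing[of 1 "nat K"] True by simp
    then have "harm (nat K) \<le> 1 + ln (real (nat K))" by (simp add: harm_def)
    also have "ln (real (nat K)) \<le> ln m" using True K by simp
    finally show ?thesis by simp
  qed
  finally show ?thesis .
qed

lemma sigma_bound:
  fixes n N :: nat
  assumes n: "n \<ge> 2" and N: "N \<ge> 20"
  shows "Sigma2 n N \<le> 16^n/real n * exp(-((real N)^2)/100) *
           (9 / (real N/(100* sqrt(real n)))) * (1 + ln (5* sqrt(real n*ln(real n))))"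
proof -
  define m where "m = 5* sqrt(real n*ln(real n))"
  define c where "c = real N/(100* sqrt(real n))"
  define C where "C = 16^n/real n * exp(-((real N)^2)/100)"
  define K where "K = floor m"
  define S where "S = B m - B (real N* sqrt(real n))"
  define U where "U = {1..K} \<times> {1..K} \<times> {1..K}"
  define g where "g = (\<lambda>(k::int,r::int,s::int). C * (exp (- ((c * real_of_int k) * (real_of_int r)^2)) *
         exp (- ((c * real_of_int k) * (real_of_int s)^2))))"
  have c0: "c > 0" unfolding c_def using n N by simp
  have C0: "C \<ge> 0" unfolding C_def by simp
  have ln2: "ln (real n) \<ge> ln 2" using n by simp
  have "ln (2::real) > 0" by simp
  then have lnpos: "ln (real n) > 0" using ln2 by linarith
  have m1: "m \<ge> 1"
  proof -
    have "real n * ln (real n) \<ge> 0" using lnpos by simp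
    have "real n * ln (real n) \<ge> 2 * ln 2" using n ln2 by (intro mult_mono) auto
    moreover have "2 * ln (2::real) \<ge> 1" using ln_2_less_1 ln2_ge_two_thirds by auto
    ultimately have "real n * ln (real n) \<ge> 1" by linarith
    then have "sqrt (real n * ln (real n)) \<ge> 1" by simp
    then show ?thesis unfolding m_def by linarith
  qed
  have SU: "S \<subseteq> U"
  proof
    fix x assume "x \<in> S"
    then obtain k r s where x: "x = (k,r,s)" and xB: "(k,r,s) \<in> B m" unfolding S_def by (cases x) auto
    then have k: "k > 0" "odd k" and rs: "r > s" "s > 0" and T: "real_of_int (k*(r^2+s^2)) \<le> m"
      unfolding B_def by auto
    have sq0: "r^2+s^2 > 0" using rs by (simp add: add_nonneg_pos)
    have "(r^2+s^2) * 1 \<le> (r^2+s^2) * k" using k sq0 by (intro mult_left_mono) auto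
    then have q: "r^2+s^2 \<le> k*(r^2+s^2)" by (simp add: mult.commute)
    have "r \<le> r^2" using rs by (simp add: power2_eq_square)
    then have r: "r \<le> k*(r^2+s^2)" using q by (smt (verit) zero_le_power2)
    have "s \<le> s^2" using rs by (simp add: power2_eq_square)
    then have s: "s \<le> k*(r^2+s^2)" using q by (smt (verit) zero_le_power2)
    have "k \<le> k*(r^2+s^2)" using k sq0 by simp
    moreover have "k*(r^2+s^2) \<le> K" unfolding K_def using T by (simp add: le_floor_iff)
    ultimately have kK: "k \<le> K" by linarith
    have "r \<le> K" "s \<le> K" using r s \<open>k*(r^2+s^2) \<le> K\<close> by linarith+
    then show "x \<in> U" unfolding U_def x using k rs kK by auto
  qed
  have finU: "finite U" unfolding U_def by simp
  have "Sigma2 n N = (\<Sum>x\<in>S. (case x of (k, r, s) \<Rightarrow>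
        real (binom (2 * n) (int n + (k * r * s) div 2)) *
        real (binom (2 * n) (int n + (k * r^2 + k * s^2 + (-1) ^ nat ((k + 1) div 2)) div 4))))"
    unfolding Sigma2_def S_def m_def by simp
  also have "\<dots> \<le> (\<Sum>x\<in>S. g x)"
  proof (intro sum_mono)
    fix x assume xS: "x \<in> S"
    obtain k r s where x: "x = (k,r,s)" by (cases x) auto
    show "(case x of (k, r, s) \<Rightarrow>
        real (binom (2 * n) (int n + (k * r * s) div 2)) *
        real (binom (2 * n) (int n + (k * r^2 + k * s^2 + (-1) ^ nat ((k + 1) div 2)) div 4))) \<le> g x"
      using term_bound[OF n N, of k r s] xS unfolding x g_def C_def c_def S_def m_def by simp
  qed
  also have "\<dots> \<le> (\<Sum>x\<in>U. g x)"
    using finU SU C0 by (intro sum_mono2) (auto simp: g_def)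
  also have "(\<Sum>x\<in>U. g x) = C * (\<Sum>k\<in>{1..K}. (\<Sum>r\<in>{1..K}. exp (- ((c * real_of_int k) * (real_of_int r)^2))) *
                                   (\<Sum>s\<in>{1..K}. exp (- ((c * real_of_int k) * (real_of_int s)^2))))"
  proof -
    have "(\<Sum>x\<in>U. g x) = (\<Sum>k\<in>{1..K}. \<Sum>r\<in>{1..K}. \<Sum>s\<in>{1..K}. C * (exp (- ((c * real_of_int k) * (real_of_int r)^2)) *
         exp (- ((c * real_of_int k) * (real_of_int s)^2))))"
      unfolding U_def g_def by (simp add: sum.cartesian_product[symmetric])
    also have "\<dots> = C * (\<Sum>k\<in>{1..K}. (\<Sum>r\<in>{1..K}. exp (- ((c * real_of_int k) * (real_of_int r)^2))) *
                                   (\<Sum>s\<in>{1..K}. exp (- ((c * real_of_int k) * (real_of_int s)^2))))"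
      unfolding sum_product unfolding sum_distrib_left by (simp only: mult.assoc)
    finally show ?thesis .
  qed
  also have "\<dots> \<le> C * (\<Sum>k\<in>{1..K}. (3 / sqrt (c * real_of_int k)) * (3 / sqrt (c * real_of_int k)))"
    using C0 c0 by (intro mult_left_mono sum_mono mult_mono gauss_sum_int) (auto intro!: sum_nonneg)
  also have "\<dots> = C * (9 / c) * (\<Sum>k\<in>{1..K}. 1 / real_of_int k)"
    using c0 by (simp add: sum_distrib_left)
  also have "\<dots> \<le> C * (9 / c) * (1 + ln m)"
    using C0 c0 m1 by (intro mult_left_mono harm_int) (auto simp: K_def)
  finally show ?thesis unfolding C_def c_def m_def .
qed


lemma ev_log: "eventually (\<lambda>n::nat. 1 + ln (5* sqrt(real n*ln(real n))) \<le> 2*ln(real n)) at_top"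
  by real_asymp

lemma h_lim: "(\<lambda>N::nat. 1800 * exp (- ((real N)^2) / 100) / real N) \<longlonglongrightarrow> 0"
  by real_asymp

lemma Sigma2_nonneg: "Sigma2 n N \<ge> 0"
  unfolding Sigma2_def by (intro sum_nonneg) (auto split: prod.split)

lemma ratio_bound:
  fixes n N :: nat
  assumes n: "n \<ge> 2" and N: "N \<ge> 20"
    and L: "1 + ln (5 * sqrt (real n * ln (real n))) \<le> 2 * ln (real n)"
  shows "Sigma2 n N / (16 ^ n * ln (real n) / sqrt (real n)) \<le> 1800 * exp (- ((real N)^2) / 100) / real N"
    and "0 \<le> Sigma2 n N / (16 ^ n * ln (real n) / sqrt (real n))"
proof -
  define s where "s = sqrt (real n)"
  define E where "E = exp (- ((real N)^2) / 100)"
  define Lg where "Lg = 1 + ln (5 * sqrt (real n * ln (real n)))"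
  have s0: "s > 0" using n by (simp add: s_def)
  have ss: "s * s = real n" using n by (simp add: s_def)
  have ln2: "ln (real n) \<ge> ln 2" using n by simp
  have "ln (2::real) > 0" by simp
  then have lnpos: "ln (real n) > 0" using ln2 by linarith
  have N0: "real N > 0" using N by simp
  have E0: "E > 0" by (simp add: E_def)
  have D0: "16 ^ n * ln (real n) / sqrt (real n) > 0" using lnpos n by simp
  have P0: "(16::real)^n * E / (real N * s) \<ge> 0" using E0 N0 s0 by simp
  have "Sigma2 n N \<le> 16^n/real n * E * (9 / (real N/(100* s))) * Lg"
    using sigma_bound[OF n N] unfolding E_def Lg_def s_def .
  also have "16^n/real n * E * (9 / (real N/(100* s))) * Lg = ((16::real)^n * E / (real N * s)) * (900 * Lg)"
    unfolding ss[symmetric] using s0 N0 by (simp add: field_simps)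
  also have "\<dots> \<le> ((16::real)^n * E / (real N * s)) * (1800 * ln (real n))"
    using L P0 unfolding Lg_def by (intro mult_left_mono) auto
  also have "\<dots> = 1800 * E / real N * (16 ^ n * ln (real n) / sqrt (real n))"
    unfolding s_def using s0 N0 by (simp add: field_simps s_def)
  finally have fin: "Sigma2 n N \<le> 1800 * E / real N * (16 ^ n * ln (real n) / sqrt (real n))" .
  define D where "D = 16 ^ n * ln (real n) / sqrt (real n)"
  have D0': "D > 0" using D0 unfolding D_def .
  have "Sigma2 n N / D \<le> 1800 * E / real N"
    using fin unfolding D_def[symmetric] by (rule pos_divide_le_eq[OF D0', THEN iffD2])
  then show "Sigma2 n N / (16 ^ n * ln (real n) / sqrt (real n)) \<le> 1800 * exp (- ((real N)^2) / 100) / real N"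
    unfolding D_def E_def .
  show "0 \<le> Sigma2 n N / (16 ^ n * ln (real n) / sqrt (real n))"
    by (rule divide_nonneg_pos[OF Sigma2_nonneg D0])
qed

theorem lemma4p1:
  shows "((\<lambda>N::nat. limsup (\<lambda>n::nat.
            ereal (Sigma2 n N / (16 ^ n * ln (real n) / sqrt (real n)))))
          \<longlongrightarrow> ereal 0) sequentially"
proof (rule tendsto_sandwich)
  define h where "h = (\<lambda>N::nat. 1800 * exp (- ((real N)^2) / 100) / real N)"
  have h: "h \<longlonglongrightarrow> 0" unfolding h_def by real_asymp
  have ev: "\<forall>\<^sub>F n in sequentially. n \<ge> 2 \<and> 1 + ln (5 * sqrt (real n * ln (real n))) \<le> 2 * ln (real n)"
    by (intro eventually_conj eventually_ge_at_top ev_log)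
  show "\<forall>\<^sub>F N in sequentially. ereal 0 \<le> limsup (\<lambda>n::nat.
            ereal (Sigma2 n N / (16 ^ n * ln (real n) / sqrt (real n))))"
  proof (intro always_eventually allI)
    fix N :: nat
    show "ereal 0 \<le> limsup (\<lambda>n::nat. ereal (Sigma2 n N / (16 ^ n * ln (real n) / sqrt (real n))))"
    proof (rule le_Limsup)
      show "\<forall>\<^sub>F n in sequentially. ereal 0 \<le> ereal (Sigma2 n N / (16 ^ n * ln (real n) / sqrt (real n)))"
        using ev
      proof (rule eventually_mono)
        fix n :: nat assume a: "n \<ge> 2 \<and> 1 + ln (5 * sqrt (real n * ln (real n))) \<le> 2 * ln (real n)"
        have "0 \<le> Sigma2 n N / (16 ^ n * ln (real n) / sqrt (real n))"
          by (intro divide_nonneg_nonneg Sigma2_nonneg) (use a in auto)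
        then show "ereal 0 \<le> ereal (Sigma2 n N / (16 ^ n * ln (real n) / sqrt (real n)))" by simp
      qed
    qed simp
  qed
  show "\<forall>\<^sub>F N in sequentially. limsup (\<lambda>n::nat.
            ereal (Sigma2 n N / (16 ^ n * ln (real n) / sqrt (real n)))) \<le> ereal (h N)"
    using eventually_ge_at_top[of "20::nat"]
  proof (rule eventually_mono)
    fix N :: nat assume N: "N \<ge> 20"
    show "limsup (\<lambda>n::nat. ereal (Sigma2 n N / (16 ^ n * ln (real n) / sqrt (real n)))) \<le> ereal (h N)"
    proof (rule Limsup_bounded)
      show "\<forall>\<^sub>F n in sequentially. ereal (Sigma2 n N / (16 ^ n * ln (real n) / sqrt (real n))) \<le> ereal (h N)"
        using ev
      proof (rule eventually_mono)
        fix n :: nat assume a: "n \<ge> 2 \<and> 1 + ln (5 * sqrt (real n * ln (real n))) \<le> 2 * ln (real n)"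
        then show "ereal (Sigma2 n N / (16 ^ n * ln (real n) / sqrt (real n))) \<le> ereal (h N)"
          using ratio_bound(1)[of n N] N unfolding h_def by simp
      qed
    qed
  qed
  show "((\<lambda>N. ereal 0) \<longlongrightarrow> ereal 0) sequentially" by simp
  show "((\<lambda>N. ereal (h N)) \<longlongrightarrow> ereal 0) sequentially" using h by (simp add: lim_ereal)
qed


end
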